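(* Consider the setting and the primal–dual iteration described in the context, with all dual variables initialized at zero: $\bm{U}_{i,j,k}^{(0)}=\bm{V}_{i,j,k}^{(0)}=\bm{0}$ for all $i\in\mathcal{V}$, $j\in\mathcal{N}_i$, $1\le k\le K$. Then for every $t\ge 0$ and all $i\in\mathcal{V}$, $j\in\mathcal{N}_i$, $k$, one has $\bm{U}_{i,j,k}^{(t)}=\bm{V}_{j,i,k}^{(t)}$, so that $\bm{Y}_{i,j,k}^{(t)}:=\bm{U}_{i,j,k}^{(t)}+\bm{V}_{j,i,k}^{(t)}=2\bm{U}_{i,j,k}^{(t)}$ satisfies $\bm{Y}_{i,j,k}^{(0)}=\bm{0}$ and, for $t\ge 1$, $$\bm{Y}_{i,j,k}^{(t)}=\bm{Y}_{i,j,k}^{(t-1)}+\rho\Big[\frac{\bm{Z}_{i,k}^{(t-1)}{\bm{Z}_{i,k}^{(t-1)}}^T}{m_{i,k}}-\frac{\bm{Z}_{j,k}^{(t-1)}{\bm{Z}_{j,k}^{(t-1)}}^T}{m_{j,k}}\Big];$$ moreover the primal step decouples across nodes: a feasible $\bm{Z}=(\bm{Z}_1,\dots,\bm{Z}_N)$ minimizes $\mathcal{L}(\bm{U}^{(t)},\bm{V}^{(t)},\bm{Z},\bm{T}^{(t-1)})$ over the feasible set if and only if, for every $i$, $\bm{Z}_i$ minimizes over $\{\bm{Z}_i:\|\bm{Z}_{i,k}\|_F^2=m_{i,k}\ \forall k\}$ the function $$\mathcal{L}'(\bm{Y}_i^{(t)},\bm{Z}_i)=R_i^c(\bm{Z}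_i)-R_i(\bm{Z}_i)+\sum_{j\in\mathcal{N}_i}\sum_{k=1}^K\Big\{\mathrm{tr}\Big[{\bm{Y}_{i,j,k}^{(t)}}^T\Big(\frac{\bm{Z}_{i,k}\bm{Z}_{i,k}^T}{m_{i,k}}-\frac{\bm{Z}_{j,k}^{(t-1)}{\bm{Z}_{j,k}^{(t-1)}}^T}{m_{j,k}}\Big)\Big]+\gamma\Big\|\frac{\bm{Z}_{i,k}\bm{Z}_{i,k}^T}{m_{i,k}}-\frac{1}{2}\Big(\frac{\bm{Z}_{i,k}^{(t-1)}{\bm{Z}_{i,k}^{(t-1)}}^T}{m_{i,k}}+\frac{\bm{Z}_{j,k}^{(t-1)}{\bm{Z}_{j,k}^{(t-1)}}^T}{m_{j,k}}\Big)\Big\|_F^2\Big\}.$$ Hence the iteration reduces to the two steps above ($\bm{Y}$-update, then per-node minimization of $\mathcal{L}'$), which can be carried out in parallel across nodes.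
   Context: Let $\mathcal{G}=(\mathcal{V},\mathcal{E})$ be a connected undirected graph with $\mathcal{V}=\{1,\dots,N\}$ and neighbor sets $\mathcal{N}_i$. Node $i$ holds a matrix $\bm{Z}_i\in\mathbb{R}^{d\times m_i}$ whose columns carry labels in $\{1,\dots,K\}$; $\bm{Z}_{i,k}\in\mathbb{R}^{d\times m_{i,k}}$ is the submatrix of columns with label $k$, and $m_{i,k}\ge 1$. Let $m=\sum_i m_i$, $\epsilon>0$, and $R_i(\bm{Z}_i)=\frac{m_i}{2m}\log\det(\bm{I}+\frac{d}{m_i\epsilon^2}\bm{Z}_i\bm{Z}_i^T)$, $R_i^c(\bm{Z}_i)=\sum_{k=1}^K\frac{m_{i,k}}{2m}\log\det(\bm{I}+\frac{d}{m_{i,k}\epsilon^2}\bm{Z}_{i,k}\bm{Z}_{i,k}^T)$. Feasible $\bm{Z}$ means $\|\bm{Z}_{i,k}\|_F^2=m_{i,k}$ for all $i,k$. For each $i\in\mathcal{V}$, $j\in\mathcal{N}_i$, $k$, there are auxiliary $d\times d$ variables $\bm{T}_{i,j,k}$ and dual variables $\bm{U}_{i,j,k},\bm{V}_{i,j,k}$, associated with the constraints $\bm{Z}_{i,k}\bm{Z}_{i,k}^T/m_{i,k}=\bm{T}_{i,j,k}$ and $\bm{Z}_{j,k}\bm{Z}_{j,k}^T/m_{j,k}=\bm{T}_{i,j,k}$. The augmented Lagrangian (penalty $\gamma>0$) is $\mathcal{L}(\bm{Z},\bm{T},\bm{U},\bm{V})=\sum_{i=1}^N\Big\{R_i^c(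\bm{Z}_i)-R_i(\bm{Z}_i)+\sum_{j\in\mathcal{N}_i}\sum_{k=1}^K\big(\mathrm{tr}[\bm{U}_{i,j,k}^T(\frac{\bm{Z}_{i,k}\bm{Z}_{i,k}^T}{m_{i,k}}-\bm{T}_{i,j,k})]+\mathrm{tr}[\bm{V}_{i,j,k}^T(\frac{\bm{Z}_{j,k}\bm{Z}_{j,k}^T}{m_{j,k}}-\bm{T}_{i,j,k})]\big)+\frac{\gamma}{2}\sum_{j\in\mathcal{N}_i}\sum_{k=1}^K\big[\|\frac{\bm{Z}_{i,k}\bm{Z}_{i,k}^T}{m_{i,k}}-\bm{T}_{i,j,k}\|_F^2+\|\frac{\bm{Z}_{j,k}\bm{Z}_{j,k}^T}{m_{j,k}}-\bm{T}_{i,j,k}\|_F^2\big]\Big\}$. Iteration (dual step size $\rho>0$): start from a feasible $\bm{Z}^{(0)}$ and zero duals, with $\bm{T}^{(0)}$ given by the $\bm{T}$-step below at $t=0$. For $t\ge1$: $\bm{U}_{i,j,k}^{(t)}=\bm{U}_{i,j,k}^{(t-1)}+\rho[\bm{Z}_{i,k}^{(t-1)}{\bm{Z}_{i,k}^{(t-1)}}^T/m_{i,k}-\bm{T}_{i,j,k}^{(t-1)}]$; $\bm{V}_{i,j,k}^{(t)}=\bm{V}_{i,j,k}^{(t-1)}+\rho[\bm{Z}_{j,k}^{(t-1)}{\bm{Z}_{j,k}^{(t-1)}}^T/m_{j,k}-\bm{T}_{i,j,k}^{(t-1)}]$; $\bm{Z}^{(t)}\in\arg\min_{\bm{Z}\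 \text{feasible}}\mathcal{L}(\bm{U}^{(t)},\bm{V}^{(t)},\bm{Z},\bm{T}^{(t-1)})$; $\bm{T}_{i,j,k}^{(t)}=\arg\min_{\bm{T}}\{-\mathrm{tr}[(\bm{U}_{i,j,k}^{(t)}+\bm{V}_{i,j,k}^{(t)})^T\bm{T}]+\frac{\gamma}{2}[\|\bm{Z}_{i,k}^{(t)}{\bm{Z}_{i,k}^{(t)}}^T/m_{i,k}-\bm{T}\|_F^2+\|\bm{Z}_{j,k}^{(t)}{\bm{Z}_{j,k}^{(t)}}^T/m_{j,k}-\bm{T}\|_F^2]\}$. $\bm{Y}_i^{(t)}$ denotes the collection $\{\bm{Y}_{i,j,k}^{(t)}\}_{j\in\mathcal{N}_i,k}$. *)

theory Defs
  imports Complex_Main "Jordan_Normal_Form.Determinant" "Jordan_Normal_Form.DL_Submatrix"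
begin

(* Graph: vertex set {1..N}, neighbour sets Nb i. Labels {1..K}.
   Node i: matrix Z_i with d rows and m i columns, column c has label lab i c. *)

definition mtr :: "real mat \<Rightarrow> real" where
  "mtr A = (\<Sum>r<dim_row A. A $$ (r, r))"

definition fro2 :: "real mat \<Rightarrow> real" where
  "fro2 A = (\<Sum>r<dim_row A. \<Sum>c<dim_col A. (A $$ (r, c))\<^sup>2)"

definition conn_undirected :: "nat \<Rightarrow> (nat \<Rightarrow> nat set) \<Rightarrow> bool" where
  "conn_undirected N Nb \<longleftrightarrow>
     (\<forall>i\<in>{1..N}. Nb i \<subseteq> {1..N} - {i}) \<and>
     (\<forall>i\<in>{1..N}. \<forall>j\<in>{1..N}. j \<in> Nb i \<longleftrightarrow> i \<in> Nb j) \<and>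
     (\<forall>i\<in>{1..N}. \<forall>j\<in>{1..N}. (i, j) \<in> {(a, b). a \<in> {1..N} \<and> b \<in> Nb a}\<^sup>*)"

definition mk :: "(nat \<Rightarrow> nat) \<Rightarrow> (nat \<Rightarrow> nat \<Rightarrow> nat) \<Rightarrow> nat \<Rightarrow> nat \<Rightarrow> nat" where
  "mk m lab i k = card {c. c < m i \<and> lab i c = k}"

definition blk :: "(nat \<Rightarrow> nat \<Rightarrow> nat) \<Rightarrow> nat \<Rightarrow> real mat \<Rightarrow> nat \<Rightarrow> real mat" where
  "blk lab i Zi k = submatrix Zi UNIV {c. lab i c = k}"

definition Anrm :: "(nat \<Rightarrow> nat) \<Rightarrow> (nat \<Rightarrow> nat \<Rightarrow> nat) \<Rightarrow> nat \<Rightarrow> real mat \<Rightarrow> nat \<Rightarrow> real mat" where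
  "Anrm m lab i Zi k = (1 / real (mk m lab i k)) \<cdot>\<^sub>m (blk lab i Zi k * transpose_mat (blk lab i Zi k))"

definition msum :: "nat \<Rightarrow> (nat \<Rightarrow> nat) \<Rightarrow> nat" where
  "msum N m = (\<Sum>i\<in>{1..N}. m i)"

definition Rterm :: "nat \<Rightarrow> real \<Rightarrow> nat \<Rightarrow> nat \<Rightarrow> real mat \<Rightarrow> real" where
  "Rterm d eps mtot n W =
     (real n / (2 * real mtot)) *
       ln (det (1\<^sub>m d + (real d / (real n * eps\<^sup>2)) \<cdot>\<^sub>m (W * transpose_mat W)))"

definition Ri :: "nat \<Rightarrow> real \<Rightarrow> nat \<Rightarrow> (nat \<Rightarrow> nat) \<Rightarrow> nat \<Rightarrow> real mat \<Rightarrow> real" where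
  "Ri d eps N m i Zi = Rterm d eps (msum N m) (m i) Zi"

definition Ric :: "nat \<Rightarrow> real \<Rightarrow> nat \<Rightarrow> nat \<Rightarrow> (nat \<Rightarrow> nat) \<Rightarrow> (nat \<Rightarrow> nat \<Rightarrow> nat) \<Rightarrow> nat \<Rightarrow> real mat \<Rightarrow> real" where
  "Ric d eps N K m lab i Zi =
     (\<Sum>k\<in>{1..K}. Rterm d eps (msum N m) (mk m lab i k) (blk lab i Zi k))"

definition feas_node :: "nat \<Rightarrow> nat \<Rightarrow> (nat \<Rightarrow> nat) \<Rightarrow> (nat \<Rightarrow> nat \<Rightarrow> nat) \<Rightarrow> nat \<Rightarrow> real mat \<Rightarrow> bool" where
  "feas_node d K m lab i Zi \<longleftrightarrow> Zi \<in> carrier_mat d (m i) \<and>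
     (\<forall>k\<in>{1..K}. fro2 (blk lab i Zi k) = real (mk m lab i k))"

definition feas :: "nat \<Rightarrow> nat \<Rightarrow> nat \<Rightarrow> (nat \<Rightarrow> nat) \<Rightarrow> (nat \<Rightarrow> nat \<Rightarrow> nat) \<Rightarrow> (nat \<Rightarrow> real mat) \<Rightarrow> bool" where
  "feas d N K m lab Z \<longleftrightarrow> (\<forall>i\<in>{1..N}. feas_node d K m lab i (Z i))"

definition Lag :: "nat \<Rightarrow> real \<Rightarrow> real \<Rightarrow> nat \<Rightarrow> (nat \<Rightarrow> nat set) \<Rightarrow> nat \<Rightarrow> (nat \<Rightarrow> nat) \<Rightarrow> (nat \<Rightarrow> nat \<Rightarrow> nat)
     \<Rightarrow> (nat \<Rightarrow> real mat) \<Rightarrow> (nat \<Rightarrow> nat \<Rightarrow> nat \<Rightarrow> real mat) \<Rightarrow> (nat \<Rightarrow> nat \<Rightarrow> nat \<Rightarrow> real mat)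
     \<Rightarrow> (nat \<Rightarrow> nat \<Rightarrow> nat \<Rightarrow> real mat) \<Rightarrow> real" where
  "Lag d eps \<gamma> N Nb K m lab Z T U V =
     (\<Sum>i\<in>{1..N}.
        Ric d eps N K m lab i (Z i) - Ri d eps N m i (Z i)
        + (\<Sum>j\<in>Nb i. \<Sum>k\<in>{1..K}.
             mtr (transpose_mat (U i j k) * (Anrm m lab i (Z i) k - T i j k))
           + mtr (transpose_mat (V i j k) * (Anrm m lab j (Z j) k - T i j k)))
        + (\<gamma> / 2) * (\<Sum>j\<in>Nb i. \<Sum>k\<in>{1..K}.
             fro2 (Anrm m lab i (Z i) k - T i j k) + fro2 (Anrm m lab j (Z j) k - T i j k)))"

definition Tobj :: "real \<Rightarrow> (nat \<Rightarrow> nat) \<Rightarrow> (nat \<Rightarrow> nat \<Rightarrow> nat) \<Rightarrow> (nat \<Rightarrow> real mat)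
     \<Rightarrow> (nat \<Rightarrow> nat \<Rightarrow> nat \<Rightarrow> real mat) \<Rightarrow> (nat \<Rightarrow> nat \<Rightarrow> nat \<Rightarrow> real mat)
     \<Rightarrow> nat \<Rightarrow> nat \<Rightarrow> nat \<Rightarrow> real mat \<Rightarrow> real" where
  "Tobj \<gamma> m lab Z U V i j k T =
     - mtr (transpose_mat (U i j k + V i j k) * T)
     + (\<gamma> / 2) * (fro2 (Anrm m lab i (Z i) k - T) + fro2 (Anrm m lab j (Z j) k - T))"

(* L'(Y_i, Z_i); Zold = Z^{(t-1)}, Yi j k = Y_{i,j,k} *)
definition Lloc :: "nat \<Rightarrow> real \<Rightarrow> real \<Rightarrow> nat \<Rightarrow> (nat \<Rightarrow> nat set) \<Rightarrow> nat \<Rightarrow> (nat \<Rightarrow> nat) \<Rightarrow> (nat \<Rightarrow> nat \<Rightarrow> nat)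
     \<Rightarrow> (nat \<Rightarrow> real mat) \<Rightarrow> nat \<Rightarrow> (nat \<Rightarrow> nat \<Rightarrow> real mat) \<Rightarrow> real mat \<Rightarrow> real" where
  "Lloc d eps \<gamma> N Nb K m lab Zold i Yi Zi =
     Ric d eps N K m lab i Zi - Ri d eps N m i Zi
     + (\<Sum>j\<in>Nb i. \<Sum>k\<in>{1..K}.
          mtr (transpose_mat (Yi j k) * (Anrm m lab i Zi k - Anrm m lab j (Zold j) k))
        + \<gamma> * fro2 (Anrm m lab i Zi k
              - (1/2) \<cdot>\<^sub>m (Anrm m lab i (Zold i) k + Anrm m lab j (Zold j) k)))"

end

theory Submission imports Defs begin

lemma mtr_eq:
  assumes "W \<in> carrier_mat d d" "X \<in> carrier_mat d d"
  shows "mtr (transpose_mat W * X) = (\<Sum>r<d. \<Sum>c<d. W $$ (r,c) * X $$ (r,c))"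
proof -
  have "mtr (transpose_mat W * X) = (\<Sum>r<d. \<Sum>c<d. W $$ (c,r) * X $$ (c,r))"
    using assms unfolding mtr_def
    by (auto simp: scalar_prod_def row_def col_def intro!: sum.cong sum.reindex_bij_witness[of _ id id]) 
  also have "\<dots> = (\<Sum>c<d. \<Sum>r<d. W $$ (c,r) * X $$ (c,r))" by (rule sum.swap)
  finally show ?thesis .
qed

lemma fro2_eq: "A \<in> carrier_mat d d \<Longrightarrow> fro2 A = (\<Sum>r<d. \<Sum>c<d. (A $$ (r,c))\<^sup>2)"
  by (auto simp: fro2_def)

lemma fro2_minus: "A \<in> carrier_mat d d \<Longrightarrow> B \<in> carrier_mat d d \<Longrightarrow>
   fro2 (A - B) = (\<Sum>r<d. \<Sum>c<d. (A $$ (r,c) - B $$ (r,c))\<^sup>2)"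
  by (auto simp: fro2_def)

lemma Anrm_car: "Zi \<in> carrier_mat d n \<Longrightarrow> Anrm m lab i Zi k \<in> carrier_mat d d"
  by (auto simp: Anrm_def blk_def dim_submatrix)

lemma dsum_zero:
  fixes f :: "nat \<Rightarrow> nat \<Rightarrow> real"
  assumes "\<And>r c. f r c \<ge> 0" "(\<Sum>r<d. \<Sum>c<d. f r c) \<le> 0" "r < d" "c < d"
  shows "f r c = 0"
proof -
  have "(\<Sum>r<d. \<Sum>c<d. f r c) = 0" using assms by (meson order_antisym sum_nonneg)
  hence "\<forall>r\<in>{..<d}. (\<Sum>c<d. f r c) = 0" by (subst sum_nonneg_eq_0_iff[symmetric]) (auto intro: sum_nonneg assms)
  hence "(\<Sum>c<d. f r c) = 0" using assms by auto
  hence "\<forall>c\<in>{..<d}. f r c = 0" by (subst sum_nonneg_eq_0_iff[symmetric]) (auto intro: assms)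
  thus ?thesis using assms by auto
qed

lemma Tuniq:
  fixes P Q X :: "real mat" and \<gamma> :: real
  assumes g: "\<gamma> > 0" and car: "P \<in> carrier_mat d d" "Q \<in> carrier_mat d d" "X \<in> carrier_mat d d"
    and W: "W = 0\<^sub>m d d"
    and mn: "\<forall>T'\<in>carrier_mat d d. - mtr (transpose_mat W * X) + (\<gamma>/2) * (fro2 (P - X) + fro2 (Q - X))
       \<le> - mtr (transpose_mat W * T') + (\<gamma>/2) * (fro2 (P - T') + fro2 (Q - T'))"
  shows "X = (1/2) \<cdot>\<^sub>m (P + Q)"
proof -
  define M where "M = (1/2) \<cdot>\<^sub>m (P + Q)"
  have Mc: "M \<in> carrier_mat d d" using car by (auto simp: M_def)
  have "- mtr (transpose_mat W * X) + (\<gamma>/2) * (fro2 (P - X) + fro2 (Q - X))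
       \<le> - mtr (transpose_mat W * M) + (\<gamma>/2) * (fro2 (P - M) + fro2 (Q - M))" using mn Mc by blast
  hence "(\<gamma>/2) * ((\<Sum>r<d. \<Sum>c<d. (P$$(r,c) - X$$(r,c))\<^sup>2) + (\<Sum>r<d. \<Sum>c<d. (Q$$(r,c) - X$$(r,c))\<^sup>2))
     \<le> (\<gamma>/2) * ((\<Sum>r<d. \<Sum>c<d. (P$$(r,c) - M$$(r,c))\<^sup>2) + (\<Sum>r<d. \<Sum>c<d. (Q$$(r,c) - M$$(r,c))\<^sup>2))"
    using car Mc W by (simp add: mtr_eq fro2_minus)
  hence "(\<Sum>r<d. \<Sum>c<d. (P$$(r,c) - X$$(r,c))\<^sup>2 + (Q$$(r,c) - X$$(r,c))\<^sup>2)
     \<le> (\<Sum>r<d. \<Sum>c<d. (P$$(r,c) - M$$(r,c))\<^sup>2 + (Q$$(r,c) - M$$(r,c))\<^sup>2)"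
    using g by (simp add: sum.distrib)
  hence "(\<Sum>r<d. \<Sum>c<d. (P$$(r,c) - X$$(r,c))\<^sup>2 + (Q$$(r,c) - X$$(r,c))\<^sup>2)
     - (\<Sum>r<d. \<Sum>c<d. (P$$(r,c) - M$$(r,c))\<^sup>2 + (Q$$(r,c) - M$$(r,c))\<^sup>2) \<le> 0" by linarith
  moreover have "(\<Sum>r<d. \<Sum>c<d. 2 * (X$$(r,c) - M$$(r,c))\<^sup>2) =
      (\<Sum>r<d. \<Sum>c<d. (P$$(r,c) - X$$(r,c))\<^sup>2 + (Q$$(r,c) - X$$(r,c))\<^sup>2)
     - (\<Sum>r<d. \<Sum>c<d. (P$$(r,c) - M$$(r,c))\<^sup>2 + (Q$$(r,c) - M$$(r,c))\<^sup>2)"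
      unfolding sum_subtractf[symmetric]
      using car by (intro sum.cong refl) (auto simp: M_def power2_eq_square algebra_simps)
  ultimately have le: "(\<Sum>r<d. \<Sum>c<d. 2 * (X$$(r,c) - M$$(r,c))\<^sup>2) \<le> 0" by linarith
  show ?thesis unfolding M_def[symmetric]
  proof (rule eq_matI)
    fix r c assume "r < dim_row M" "c < dim_col M"
    hence rc: "r < d" "c < d" using Mc by auto
    have "2 * (X$$(r,c) - M$$(r,c))\<^sup>2 = 0" by (rule dsum_zero[OF _ le rc]) simp
    thus "X $$ (r,c) = M $$ (r,c)" by simp
  qed (use car Mc in auto)
qed

lemma decouple:
  fixes Lg :: "(nat \<Rightarrow> 'a) \<Rightarrow> real" and L :: "nat \<Rightarrow> 'a \<Rightarrow> real" and fe :: "nat \<Rightarrow> 'a \<Rightarrow> bool"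
  assumes eq: "\<forall>Z. (\<forall>i\<in>I. fe i (Z i)) \<longrightarrow> Lg Z = (\<Sum>i\<in>I. L i (Z i)) + C"
    and fin: "finite I" and fz: "\<forall>i\<in>I. fe i (Z i)"
  shows "(\<forall>Z'. (\<forall>i\<in>I. fe i (Z' i)) \<longrightarrow> Lg Z \<le> Lg Z') \<longleftrightarrow> (\<forall>i\<in>I. \<forall>z. fe i z \<longrightarrow> L i (Z i) \<le> L i z)"
proof
  assume H: "\<forall>Z'. (\<forall>i\<in>I. fe i (Z' i)) \<longrightarrow> Lg Z \<le> Lg Z'"
  show "\<forall>i\<in>I. \<forall>z. fe i z \<longrightarrow> L i (Z i) \<le> L i z"
  proof (intro ballI allI impI)
    fix i z assume i: "i \<in> I" and z: "fe i z"
    let ?Z = "Z(i := z)"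
    have f2: "\<forall>l\<in>I. fe l (?Z l)" using fz z by auto
    have "Lg Z \<le> Lg ?Z" using spec[OF H, of ?Z] f2 by (rule mp)
    moreover have "Lg Z = (\<Sum>l\<in>I. L l (Z l)) + C" using spec[OF eq, of Z] fz by (rule mp)
    moreover have "Lg ?Z = (\<Sum>l\<in>I. L l (?Z l)) + C" using spec[OF eq] f2 by (rule mp)
    ultimately have "(\<Sum>l\<in>I. L l (Z l)) \<le> (\<Sum>l\<in>I. L l (?Z l))" by linarith
    moreover have "(\<Sum>l\<in>I. L l (Z l)) = L i (Z i) + (\<Sum>l\<in>I - {i}. L l (Z l))"
      using fin i by (simp add: sum.remove)
    moreover have "(\<Sum>l\<in>I. L l (?Z l)) = L i z + (\<Sum>l\<in>I - {i}. L l (Z l))"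
      using fin i by (simp add: sum.remove)
    ultimately show "L i (Z i) \<le> L i z" by simp
  qed
next
  assume H: "\<forall>i\<in>I. \<forall>z. fe i z \<longrightarrow> L i (Z i) \<le> L i z"
  show "\<forall>Z'. (\<forall>i\<in>I. fe i (Z' i)) \<longrightarrow> Lg Z \<le> Lg Z'"
  proof (intro allI impI)
    fix Z' assume f2: "\<forall>i\<in>I. fe i (Z' i)"
    have "(\<Sum>l\<in>I. L l (Z l)) \<le> (\<Sum>l\<in>I. L l (Z' l))" using H f2 by (intro sum_mono) auto
    moreover have "Lg Z = (\<Sum>l\<in>I. L l (Z l)) + C" using spec[OF eq, of Z] fz by (rule mp)
    moreover have "Lg Z' = (\<Sum>l\<in>I. L l (Z' l)) + C" using spec[OF eq] f2 by (rule mp)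
    ultimately show "Lg Z \<le> Lg Z'" by linarith
  qed
qed

lemma sum_swap_nb:
  assumes "\<forall>i\<in>A. Nb i \<subseteq> A" "\<forall>i\<in>A. \<forall>j\<in>A. j \<in> Nb i \<longleftrightarrow> i \<in> Nb j" "finite A"
  shows "(\<Sum>i\<in>A. \<Sum>j\<in>Nb i. f i j) = (\<Sum>i\<in>A. \<Sum>j\<in>Nb i. f j i)"
proof -
  have fin: "\<forall>i\<in>A. finite (Nb i)" using assms finite_subset by blast
  have s1: "\<And>a b. a \<in> A \<Longrightarrow> b \<in> Nb a \<Longrightarrow> b \<in> A" using assms(1) by blast
  have s2: "\<And>a b. a \<in> A \<Longrightarrow> b \<in> Nb a \<Longrightarrow> a \<in> Nb b" using assms(1,2) by blast
  have "(\<Sum>i\<in>A. \<Sum>j\<in>Nb i. f i j) = (\<Sum>(i,j)\<in>Sigma A Nb. f i j)"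
    using fin assms(3) by (simp add: sum.Sigma)
  also have "\<dots> = (\<Sum>(i,j)\<in>Sigma A Nb. f j i)"
    by (intro sum.reindex_bij_witness[of _ prod.swap prod.swap]) (auto split: prod.splits intro: s1 s2)
  also have "\<dots> = (\<Sum>i\<in>A. \<Sum>j\<in>Nb i. f j i)"
    using fin assms(3) by (simp add: sum.Sigma)
  finally show ?thesis .
qed

lemma triple:
  fixes u v x ob tt :: "real mat"
  assumes c: "u \<in> carrier_mat d d" "v \<in> carrier_mat d d" "x \<in> carrier_mat d d" "ob \<in> carrier_mat d d" "tt \<in> carrier_mat d d"
  shows "mtr (transpose_mat u * (x - tt)) + (\<gamma>/2) * fro2 (x - tt) + (mtr (transpose_mat v * (x - tt)) + (\<gamma>/2) * fro2 (x - tt))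
     = mtr (transpose_mat (u + v) * (x - ob)) + \<gamma> * fro2 (x - tt) + mtr (transpose_mat (u + v) * (ob - tt))"
proof -
  have c2: "x - tt \<in> carrier_mat d d" "x - ob \<in> carrier_mat d d" "ob - tt \<in> carrier_mat d d" "u + v \<in> carrier_mat d d"
    using c by auto
  have e1: "mtr (transpose_mat u * (x - tt)) = (\<Sum>r<d. \<Sum>c<d. u$$(r,c) * (x - tt)$$(r,c))"
    "mtr (transpose_mat v * (x - tt)) = (\<Sum>r<d. \<Sum>c<d. v$$(r,c) * (x - tt)$$(r,c))"
    "mtr (transpose_mat (u+v) * (x - ob)) = (\<Sum>r<d. \<Sum>c<d. (u+v)$$(r,c) * (x - ob)$$(r,c))"
    "mtr (transpose_mat (u+v) * (ob - tt)) = (\<Sum>r<d. \<Sum>c<d. (u+v)$$(r,c) * (ob - tt)$$(r,c))"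
    "fro2 (x - tt) = (\<Sum>r<d. \<Sum>c<d. (x - tt)$$(r,c)^2)"
    using c c2 by (simp_all only: mtr_eq fro2_eq)
  have "\<forall>r<d. \<forall>c<d. u$$(r,c) * (x - tt)$$(r,c) + (\<gamma>/2) * (x - tt)$$(r,c)^2 + (v$$(r,c) * (x - tt)$$(r,c) + (\<gamma>/2) * (x - tt)$$(r,c)^2)
     = (u+v)$$(r,c) * (x - ob)$$(r,c) + \<gamma> * (x - tt)$$(r,c)^2 + (u+v)$$(r,c) * (ob - tt)$$(r,c)"
  proof (intro allI impI)
    fix r cc assume rc: "r < d" "cc < d"
    have ri: "\<And>a b o' t' g :: real. a*(o'-t') + g/2*(o'-t')^2 + (b*(o'-t') + g/2*(o'-t')^2) = (a+b)*(o'-b') + g*(o'-t')^2 + (a+b)*(b'-t')" for b'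
      by (simp add: algebra_simps power2_eq_square)
    show "u$$(r,cc) * (x - tt)$$(r,cc) + (\<gamma>/2) * (x - tt)$$(r,cc)^2 + (v$$(r,cc) * (x - tt)$$(r,cc) + (\<gamma>/2) * (x - tt)$$(r,cc)^2)
     = (u+v)$$(r,cc) * (x - ob)$$(r,cc) + \<gamma> * (x - tt)$$(r,cc)^2 + (u+v)$$(r,cc) * (ob - tt)$$(r,cc)"
      using c rc by (simp only: index_minus_mat index_add_mat carrier_matD ri)
  qed
  hence "(\<Sum>r<d. \<Sum>c<d. u$$(r,c) * (x - tt)$$(r,c) + (\<gamma>/2) * (x - tt)$$(r,c)^2 + (v$$(r,c) * (x - tt)$$(r,c) + (\<gamma>/2) * (x - tt)$$(r,c)^2))
     = (\<Sum>r<d. \<Sum>c<d. (u+v)$$(r,c) * (x - ob)$$(r,c) + \<gamma> * (x - tt)$$(r,c)^2 + (u+v)$$(r,c) * (ob - tt)$$(r,c))"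
    by (intro sum.cong refl) auto
  thus ?thesis unfolding e1 by (simp add: sum.distrib sum_distrib_left)
qed


theorem proposition1:
  fixes N K d :: nat and Nb :: "nat \<Rightarrow> nat set"
    and m :: "nat \<Rightarrow> nat" and lab :: "nat \<Rightarrow> nat \<Rightarrow> nat"
    and eps \<gamma> \<rho> :: real
    and Zs :: "nat \<Rightarrow> nat \<Rightarrow> real mat"
    and T U V :: "nat \<Rightarrow> nat \<Rightarrow> nat \<Rightarrow> nat \<Rightarrow> real mat"
  assumes graph: "conn_undirected N Nb"
    and labels: "\<forall>i\<in>{1..N}. \<forall>c<m i. lab i c \<in> {1..K}"
    and mk_pos: "\<forall>i\<in>{1..N}. \<forall>k\<in>{1..K}. mk m lab i k \<ge> 1"
    and eps_pos: "eps > 0" and gamma_pos: "\<gamma> > 0" and rho_pos: "\<rho> > 0"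
    and Z0: "feas d N K m lab (Zs 0)"
    and U0: "\<forall>i\<in>{1..N}. \<forall>j\<in>Nb i. \<forall>k\<in>{1..K}. U 0 i j k = 0\<^sub>m d d"
    and V0: "\<forall>i\<in>{1..N}. \<forall>j\<in>Nb i. \<forall>k\<in>{1..K}. V 0 i j k = 0\<^sub>m d d"
    and Tstep: "\<forall>t. \<forall>i\<in>{1..N}. \<forall>j\<in>Nb i. \<forall>k\<in>{1..K}.
                  T t i j k \<in> carrier_mat d d \<and>
                  (\<forall>T'\<in>carrier_mat d d.
                     Tobj \<gamma> m lab (Zs t) (U t) (V t) i j k (T t i j k)
                       \<le> Tobj \<gamma> m lab (Zs t) (U t) (V t) i j k T')"
    and Ustep: "\<forall>t. \<forall>i\<in>{1..N}. \<forall>j\<in>Nb i. \<forall>k\<in>{1..K}.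
                  U (Suc t) i j k = U t i j k + \<rho> \<cdot>\<^sub>m (Anrm m lab i (Zs t i) k - T t i j k)"
    and Vstep: "\<forall>t. \<forall>i\<in>{1..N}. \<forall>j\<in>Nb i. \<forall>k\<in>{1..K}.
                  V (Suc t) i j k = V t i j k + \<rho> \<cdot>\<^sub>m (Anrm m lab j (Zs t j) k - T t i j k)"
    and Zstep: "\<forall>t. feas d N K m lab (Zs (Suc t)) \<and>
                  (\<forall>Z. feas d N K m lab Z \<longrightarrow>
                     Lag d eps \<gamma> N Nb K m lab (Zs (Suc t)) (T t) (U (Suc t)) (V (Suc t))
                       \<le> Lag d eps \<gamma> N Nb K m lab Z (T t) (U (Suc t)) (V (Suc t)))"
  shows "(\<forall>t. \<forall>i\<in>{1..N}. \<forall>j\<in>Nb i. \<forall>k\<in>{1..K}.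
            U t i j k = V t j i k \<and> U t i j k + V t j i k = 2 \<cdot>\<^sub>m U t i j k)
       \<and> (\<forall>i\<in>{1..N}. \<forall>j\<in>Nb i. \<forall>k\<in>{1..K}. U 0 i j k + V 0 j i k = 0\<^sub>m d d)
       \<and> (\<forall>t. \<forall>i\<in>{1..N}. \<forall>j\<in>Nb i. \<forall>k\<in>{1..K}.
            U (Suc t) i j k + V (Suc t) j i k
              = (U t i j k + V t j i k)
                + \<rho> \<cdot>\<^sub>m (Anrm m lab i (Zs t i) k - Anrm m lab j (Zs t j) k))
       \<and> (\<forall>t. \<forall>Z. feas d N K m lab Z \<longrightarrow>
            ((\<forall>Z'. feas d N K m lab Z' \<longrightarrow>
                 Lag d eps \<gamma> N Nb K m lab Z (T t) (U (Suc t)) (V (Suc t))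
                   \<le> Lag d eps \<gamma> N Nb K m lab Z' (T t) (U (Suc t)) (V (Suc t)))
             \<longleftrightarrow>
             (\<forall>i\<in>{1..N}. \<forall>Zi'. feas_node d K m lab i Zi' \<longrightarrow>
                 Lloc d eps \<gamma> N Nb K m lab (Zs t) i
                      (\<lambda>j k. U (Suc t) i j k + V (Suc t) j i k) (Z i)
                   \<le> Lloc d eps \<gamma> N Nb K m lab (Zs t) i
                      (\<lambda>j k. U (Suc t) i j k + V (Suc t) j i k) Zi')))"
proof -
  let ?A = "\<lambda>t i k. Anrm m lab i (Zs t i) k"
  have nbA: "\<forall>i\<in>{1..N}. Nb i \<subseteq> {1..N}" and sym: "\<forall>i\<in>{1..N}. \<forall>j\<in>{1..N}. j \<in> Nb i \<longleftrightarrow> i \<in> Nb j"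
    using graph unfolding conn_undirected_def by blast+
  have nb1: "\<And>i j. i \<in> {1..N} \<Longrightarrow> j \<in> Nb i \<Longrightarrow> j \<in> {1..N}" using nbA by blast
  have nb2: "\<And>i j. i \<in> {1..N} \<Longrightarrow> j \<in> Nb i \<Longrightarrow> i \<in> Nb j" using nbA sym by blast
  have feasZ: "\<And>t. feas d N K m lab (Zs t)"
  proof -
    fix t show "feas d N K m lab (Zs t)" using Z0 Zstep by (cases t) auto
  qed
  have Acar: "\<And>t i k. i \<in> {1..N} \<Longrightarrow> ?A t i k \<in> carrier_mat d d"
  proof -
    fix t i k assume "i \<in> {1..N}"
    hence "Zs t i \<in> carrier_mat d (m i)" using feasZ[of t] unfolding feas_def feas_node_def by blast
    thus "?A t i k \<in> carrier_mat d d" by (rule Anrm_car)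
  qed
  have Tform: "T t i j k = (1/2) \<cdot>\<^sub>m (?A t i k + ?A t j k)"
    if i: "i \<in> {1..N}" and j: "j \<in> Nb i" and k: "k \<in> {1..K}" and z: "U t i j k + V t i j k = 0\<^sub>m d d" for t i j k
  proof -
    have ts: "T t i j k \<in> carrier_mat d d \<and>
                  (\<forall>T'\<in>carrier_mat d d.
                     Tobj \<gamma> m lab (Zs t) (U t) (V t) i j k (T t i j k)
                       \<le> Tobj \<gamma> m lab (Zs t) (U t) (V t) i j k T')" using Tstep i j k by blast
    show ?thesis
      apply (rule Tuniq[OF gamma_pos Acar[OF i] Acar[OF nb1[OF i j]] conjunct1[OF ts] z])
      using conjunct2[OF ts] unfolding Tobj_def by blast
  qed
  define invr where "invr t \<longleftrightarrow> (\<forall>i\<in>{1..N}. \<forall>j\<in>Nb i. \<forall>k\<in>{1..K}. U t i j k \<in> carrier_mat d d \<and> V t i j k \<in> carrier_mat d d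
      \<and> U t i j k + V t i j k = 0\<^sub>m d d \<and> U t i j k = V t j i k)" for t
  have invt: "invr t" for t
  proof (induction t)
    case 0
    show ?case unfolding invr_def
    proof (intro ballI)
      fix i j k assume i: "i \<in> {1..N}" and j: "j \<in> Nb i" and k: "k \<in> {1..K}"
      have "U 0 i j k = 0\<^sub>m d d" "V 0 i j k = 0\<^sub>m d d" "V 0 j i k = 0\<^sub>m d d"
        using U0 V0 i j k nb1[OF i j] nb2[OF i j] by auto
      thus "U 0 i j k \<in> carrier_mat d d \<and> V 0 i j k \<in> carrier_mat d d
      \<and> U 0 i j k + V 0 i j k = 0\<^sub>m d d \<and> U 0 i j k = V 0 j i k" by simp
    qed
  next
    case (Suc t)
    show ?case unfolding invr_def
    proof (intro ballI)
      fix i j k assume i: "i \<in> {1..N}" and j: "j \<in> Nb i" and k: "k \<in> {1..K}"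
      have j1: "j \<in> {1..N}" and i2: "i \<in> Nb j" using nb1[OF i j] nb2[OF i j] .
      have IH: "U t i j k \<in> carrier_mat d d" "V t i j k \<in> carrier_mat d d"
        "U t i j k + V t i j k = 0\<^sub>m d d" "U t i j k = V t j i k"
        "U t j i k + V t j i k = 0\<^sub>m d d"
        using Suc[unfolded invr_def] i j k j1 i2 by blast+
      have Ai: "?A t i k \<in> carrier_mat d d" and Aj: "?A t j k \<in> carrier_mat d d" using Acar i j1 by auto
      have Tij: "T t i j k = (1/2) \<cdot>\<^sub>m (?A t i k + ?A t j k)" by (rule Tform[OF i j k IH(3)])
      have Tji: "T t j i k = (1/2) \<cdot>\<^sub>m (?A t i k + ?A t j k)"
        using Tform[OF j1 i2 k IH(5)] comm_add_mat[OF Ai Aj] by simp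
      have Us: "U (Suc t) i j k = U t i j k + \<rho> \<cdot>\<^sub>m (?A t i k - T t i j k)" using Ustep i j k by blast
      have Vs: "V (Suc t) i j k = V t i j k + \<rho> \<cdot>\<^sub>m (?A t j k - T t i j k)" using Vstep i j k by blast
      have Vs2: "V (Suc t) j i k = V t j i k + \<rho> \<cdot>\<^sub>m (?A t i k - T t j i k)" using Vstep j1 i2 k by blast
      have c1: "U (Suc t) i j k \<in> carrier_mat d d" "V (Suc t) i j k \<in> carrier_mat d d"
        unfolding Us Vs Tij using IH Ai Aj by auto
      have c3: "U (Suc t) i j k + V (Suc t) i j k = 0\<^sub>m d d"
      proof (rule eq_matI)
        fix r c assume rc: "r < dim_row (0\<^sub>m d d :: real mat)" "c < dim_col (0\<^sub>m d d :: real mat)"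
        hence rc': "r < d" "c < d" by auto
        have "(U t i j k + V t i j k) $$ (r,c) = 0" using IH(3) rc' by simp
        hence "U t i j k $$ (r,c) + V t i j k $$ (r,c) = 0" using IH rc' by simp
        thus "(U (Suc t) i j k + V (Suc t) i j k) $$ (r,c) = (0\<^sub>m d d :: real mat) $$ (r,c)"
          unfolding Us Vs Tij using IH Ai Aj rc' by (simp add: algebra_simps)
      qed (use c1 in auto)
      have c4: "U (Suc t) i j k = V (Suc t) j i k" unfolding Us Vs2 Tij Tji IH(4) ..
      show "U (Suc t) i j k \<in> carrier_mat d d \<and> V (Suc t) i j k \<in> carrier_mat d d
      \<and> U (Suc t) i j k + V (Suc t) i j k = 0\<^sub>m d d \<and> U (Suc t) i j k = V (Suc t) j i k"
        using c1 c3 c4 by blast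
    qed
  qed
  have IV: "U t i j k \<in> carrier_mat d d" "V t i j k \<in> carrier_mat d d"
        "U t i j k + V t i j k = 0\<^sub>m d d" "U t i j k = V t j i k" "V t j i k \<in> carrier_mat d d"
    if i: "i \<in> {1..N}" and j: "j \<in> Nb i" and k: "k \<in> {1..K}" for t i j k
    using invt[of t, unfolded invr_def] i j k nb1[OF i j] nb2[OF i j] by blast+
  have Tsym: "T t i j k = (1/2) \<cdot>\<^sub>m (?A t i k + ?A t j k)" "T t j i k = T t i j k"
    if i: "i \<in> {1..N}" and j: "j \<in> Nb i" and k: "k \<in> {1..K}" for t i j k
  proof -
    show a: "T t i j k = (1/2) \<cdot>\<^sub>m (?A t i k + ?A t j k)" by (rule Tform[OF i j k IV(3)[OF i j k]])
    have "T t j i k = (1/2) \<cdot>\<^sub>m (?A t j k + ?A t i k)"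
      by (rule Tform[OF nb1[OF i j] nb2[OF i j] k IV(3)[OF nb1[OF i j] nb2[OF i j] k]])
    thus "T t j i k = T t i j k" unfolding a using comm_add_mat[OF Acar[OF i] Acar[OF nb1[OF i j]]] by simp
  qed
  have P1: "\<forall>t. \<forall>i\<in>{1..N}. \<forall>j\<in>Nb i. \<forall>k\<in>{1..K}.
            U t i j k = V t j i k \<and> U t i j k + V t j i k = 2 \<cdot>\<^sub>m U t i j k"
  proof (intro allI ballI conjI)
    fix t i j k assume i: "i \<in> {1..N}" and j: "j \<in> Nb i" and k: "k \<in> {1..K}"
    show e: "U t i j k = V t j i k" by (rule IV(4)[OF i j k])
    show "U t i j k + V t j i k = 2 \<cdot>\<^sub>m U t i j k" unfolding e[symmetric]
      using IV(1)[where t=t, OF i j k] by (intro eq_matI) auto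
  qed
  have P2: "\<forall>i\<in>{1..N}. \<forall>j\<in>Nb i. \<forall>k\<in>{1..K}. U 0 i j k + V 0 j i k = 0\<^sub>m d d"
  proof (intro ballI)
    fix i j k assume i: "i \<in> {1..N}" and j: "j \<in> Nb i" and k: "k \<in> {1..K}"
    have "U 0 i j k = 0\<^sub>m d d" "V 0 j i k = 0\<^sub>m d d"
      using U0 V0 i j k nb1[OF i j] nb2[OF i j] by auto
    thus "U 0 i j k + V 0 j i k = 0\<^sub>m d d" by simp
  qed
  have P3: "\<forall>t. \<forall>i\<in>{1..N}. \<forall>j\<in>Nb i. \<forall>k\<in>{1..K}.
            U (Suc t) i j k + V (Suc t) j i k
              = (U t i j k + V t j i k)
                + \<rho> \<cdot>\<^sub>m (Anrm m lab i (Zs t i) k - Anrm m lab j (Zs t j) k)"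
  proof (intro allI ballI)
    fix t i j k assume i: "i \<in> {1..N}" and j: "j \<in> Nb i" and k: "k \<in> {1..K}"
    have j1: "j \<in> {1..N}" and i2: "i \<in> Nb j" using nb1[OF i j] nb2[OF i j] .
    have Us: "U (Suc t) i j k = U t i j k + \<rho> \<cdot>\<^sub>m (?A t i k - T t i j k)" using Ustep i j k by blast
    have Vs2: "V (Suc t) j i k = V t j i k + \<rho> \<cdot>\<^sub>m (?A t i k - T t j i k)" using Vstep j1 i2 k by blast
    have Ai: "?A t i k \<in> carrier_mat d d" and Aj: "?A t j k \<in> carrier_mat d d" using Acar i j1 by auto
    show "U (Suc t) i j k + V (Suc t) j i k
              = (U t i j k + V t j i k)
                + \<rho> \<cdot>\<^sub>m (Anrm m lab i (Zs t i) k - Anrm m lab j (Zs t j) k)"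
      unfolding Us Vs2 Tsym(2)[OF i j k] Tsym(1)[OF i j k]
      using IV[where t=t, OF i j k] Ai Aj by (intro eq_matI) (auto simp: algebra_simps)
  qed
  have P4: "\<forall>t. \<forall>Z. feas d N K m lab Z \<longrightarrow>
            ((\<forall>Z'. feas d N K m lab Z' \<longrightarrow>
                 Lag d eps \<gamma> N Nb K m lab Z (T t) (U (Suc t)) (V (Suc t))
                   \<le> Lag d eps \<gamma> N Nb K m lab Z' (T t) (U (Suc t)) (V (Suc t)))
             \<longleftrightarrow>
             (\<forall>i\<in>{1..N}. \<forall>Zi'. feas_node d K m lab i Zi' \<longrightarrow>
                 Lloc d eps \<gamma> N Nb K m lab (Zs t) i
                      (\<lambda>j k. U (Suc t) i j k + V (Suc t) j i k) (Z i)
                   \<le> Lloc d eps \<gamma> N Nb K m lab (Zs t) i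
                      (\<lambda>j k. U (Suc t) i j k + V (Suc t) j i k) Zi'))"
  proof (intro allI impI)
    fix t Z assume fZ: "feas d N K m lab Z"
    let ?U = "U (Suc t)" and ?V = "V (Suc t)"
    let ?L = "\<lambda>i. Lloc d eps \<gamma> N Nb K m lab (Zs t) i (\<lambda>j k. U (Suc t) i j k + V (Suc t) j i k)"
    define C where "C = (\<Sum>i\<in>{1..N}. \<Sum>j\<in>Nb i. \<Sum>k\<in>{1..K}.
        mtr (transpose_mat (?U i j k + ?V j i k) * (?A t j k - T t i j k)))"
    have eq: "\<forall>Z. (\<forall>i\<in>{1..N}. feas_node d K m lab i (Z i)) \<longrightarrow>
        Lag d eps \<gamma> N Nb K m lab Z (T t) ?U ?V = (\<Sum>i\<in>{1..N}. ?L i (Z i)) + C"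
    proof (intro allI impI)
      fix Z assume fz: "\<forall>i\<in>{1..N}. feas_node d K m lab i (Z i)"
      let ?X = "\<lambda>i k. Anrm m lab i (Z i) k"
      have Xc: "?X i k \<in> carrier_mat d d" if "i \<in> {1..N}" for i k
        using fz that Anrm_car unfolding feas_node_def by blast
      define R where "R i = Ric d eps N K m lab i (Z i) - Ri d eps N m i (Z i)" for i
      define F where "F i j = (\<Sum>k\<in>{1..K}. mtr (transpose_mat (?U i j k) * (?X i k - T t i j k))
           + (\<gamma>/2) * fro2 (?X i k - T t i j k))" for i j
      define G where "G i j = (\<Sum>k\<in>{1..K}. mtr (transpose_mat (?V i j k) * (?X j k - T t i j k))
           + (\<gamma>/2) * fro2 (?X j k - T t i j k))" for i j
      define l where "l i j k = mtr (transpose_mat (?U i j k + ?V j i k) * (?X i k - ?A t j k))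
           + \<gamma> * fro2 (?X i k - (1/2) \<cdot>\<^sub>m (?A t i k + ?A t j k))" for i j k
      define c where "c i j k = mtr (transpose_mat (?U i j k + ?V j i k) * (?A t j k - T t i j k))" for i j k
      have s1: "Lag d eps \<gamma> N Nb K m lab Z (T t) ?U ?V = (\<Sum>i\<in>{1..N}. R i + (\<Sum>j\<in>Nb i. F i j + G i j))"
        unfolding Lag_def R_def F_def G_def
        by (intro sum.cong refl) (simp add: sum.distrib sum_distrib_left algebra_simps)
      also have "\<dots> = (\<Sum>i\<in>{1..N}. R i) + (\<Sum>i\<in>{1..N}. \<Sum>j\<in>Nb i. F i j) + (\<Sum>i\<in>{1..N}. \<Sum>j\<in>Nb i. G i j)"
        by (simp add: sum.distrib)
      also have "(\<Sum>i\<in>{1..N}. \<Sum>j\<in>Nb i. G i j) = (\<Sum>i\<in>{1..N}. \<Sum>j\<in>Nb i. G j i)"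
        by (rule sum_swap_nb[OF nbA sym]) simp
      also have "(\<Sum>i\<in>{1..N}. R i) + (\<Sum>i\<in>{1..N}. \<Sum>j\<in>Nb i. F i j) + (\<Sum>i\<in>{1..N}. \<Sum>j\<in>Nb i. G j i)
          = (\<Sum>i\<in>{1..N}. R i) + (\<Sum>i\<in>{1..N}. \<Sum>j\<in>Nb i. F i j + G j i)"
        by (simp add: sum.distrib)
      also have "(\<Sum>i\<in>{1..N}. \<Sum>j\<in>Nb i. F i j + G j i) = (\<Sum>i\<in>{1..N}. \<Sum>j\<in>Nb i. \<Sum>k\<in>{1..K}. l i j k + c i j k)"
      proof (intro sum.cong refl)
        fix i j assume i: "i \<in> {1..N}" and j: "j \<in> Nb i"
        show "F i j + G j i = (\<Sum>k\<in>{1..K}. l i j k + c i j k)"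
          unfolding F_def G_def sum.distrib[symmetric]
        proof (intro sum.cong refl)
          fix k assume k: "k \<in> {1..K}"
          have j1: "j \<in> {1..N}" and i2: "i \<in> Nb j" using nb1[OF i j] nb2[OF i j] .
          have cU: "?U i j k \<in> carrier_mat d d" and cV: "?V j i k \<in> carrier_mat d d"
            using IV(1)[of i j k "Suc t"] IV(5)[of i j k "Suc t"] i j k by auto
          show "mtr (transpose_mat (?U i j k) * (?X i k - T t i j k)) + (\<gamma>/2) * fro2 (?X i k - T t i j k)
             + (mtr (transpose_mat (?V j i k) * (?X i k - T t j i k)) + (\<gamma>/2) * fro2 (?X i k - T t j i k))
             = l i j k + c i j k"
            unfolding l_def c_def Tsym(2)[OF i j k] Tsym(1)[OF i j k, symmetric]
            apply (rule triple[OF cU cV Xc[OF i] Acar[OF j1]])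
            using Tsym(1)[OF i j k] Acar[OF i] Acar[OF j1] by simp
        qed
      qed
      finally show "Lag d eps \<gamma> N Nb K m lab Z (T t) ?U ?V = (\<Sum>i\<in>{1..N}. ?L i (Z i)) + C"
        unfolding C_def Lloc_def R_def l_def c_def by (simp add: sum.distrib)
    qed
    show "(\<forall>Z'. feas d N K m lab Z' \<longrightarrow>
                 Lag d eps \<gamma> N Nb K m lab Z (T t) ?U ?V
                   \<le> Lag d eps \<gamma> N Nb K m lab Z' (T t) ?U ?V)
             \<longleftrightarrow>
             (\<forall>i\<in>{1..N}. \<forall>Zi'. feas_node d K m lab i Zi' \<longrightarrow> ?L i (Z i) \<le> ?L i Zi')"
      unfolding feas_def
      by (rule decouple[OF eq]) (use fZ in \<open>auto simp: feas_def\<close>)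
  qed
  show ?thesis using P1 P2 P3 P4 by blast
qed

end
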